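(* Let $N\ge3$, $M\ge2$, $N_e\ge2$, $L\ge1$ be integers, $P>0$, $\tau\in(0,1)$, $\sigma_r>0$, $c_3,c_4\in\mathbb{C}\setminus\{0\}$, $\alpha,\beta\in\mathbb{C}$ with $|\alpha|^2+|\beta|^2=1$, $\alpha\neq0$, and $\delta\in(0,\pi/2)$. Let $h_1,\dots,h_N$ be i.i.d. $\mathcal{CN}(0,1)$, and let $\theta$ and $\phi$ be uniform on $[-\pi/2+\delta,\pi/2-\delta]$, independent of $\mathbf{h}$. With $\tilde{\mathbf{a}}=\mathbf{a}(\theta)/\|\mathbf{a}(\theta)\|$, $\tilde{\mathbf{h}}=\frac{\mathbf{h}-(\tilde{\mathbf{a}}^H\mathbf{h})\tilde{\mathbf{a}}}{\|\mathbf{h}-(\tilde{\mathbf{a}}^H\mathbf{h})\tilde{\mathbf{a}}\|}$, $\mathbf{t}_1=\alpha\tilde{\mathbf{a}}+\beta\tilde{\mathbf{h}}$, $\mathbf{t}_3,\dots,\mathbf{t}_N$ an orthonormal basis of the orthogonal complement of $\mathrm{span}\{\tilde{\mathbf{a}},\tilde{\mathbf{h}}\}$, $\mathbf{R}_x=P\tau\mathbf{t}_1\mathbf{t}_1^H+\frac{(1-\tau)P}{N-2}\sum_{i=3}^N\mathbf{t}_i\mathbf{t}_i^H$, define $$\mathrm{CRB}(\theta)=\frac{Q}{\|\mathbf{b}'\|^2\mathbf{a}^H\mathbf{R}_x\mathbf{a}+\|\mathbf{b}\|^2\mathbf{a}'^H\mathbf{R}_x\mathbf{a}'-\frac{|\|\mathbf{b}\|^2\mathbf{a}^H\mathbf{R}_x\mathbf{a}'|^2}{\|\mathbf{b}\|^2\mathbf{a}^H\mathbf{R}_x\mathbf{a}}},\quad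 Q=\frac{\sigma_r^2}{2|c_3|^2L}.$$ Then $$\mathbb{E}[\mathrm{CRB}(\theta)]\ge\frac{12\sigma_r^2\tan(\frac\pi2-\delta)}{(\pi-2\delta)MN\pi^2LP|c_3|^2\big(|\alpha|^2\tau(M^2-1)+\frac{(N^2-1)(1-\tau)}{N-2}\big)}.$$ Moreover, with $d=P\tau|\alpha|^2N$, the strong-eavesdropper bound $\mathrm{CRB}_s(\phi)=\frac{\sigma_r^2}{2|c_4|^2L\|\mathbf{c}'(\phi)\|^2\mathbf{a}^H\mathbf{R}_x\mathbf{a}}$ satisfies $$\mathbb{E}[\mathrm{CRB}_s(\phi)]=\frac{12\sigma_r^2\tan(\frac\pi2-\delta)}{N_eN\pi^2(\pi-2\delta)LP|c_4|^2|\alpha|^2\tau(N_e^2-1)},$$ and the weak-eavesdropper bound $\mathrm{CRB}_w(\phi)=\frac{6\sigma_r^2(\sigma_r^2+|c_4|^2LdN_e)}{|c_4|^4L^3d^2\pi^2\cos^2(\phi)N_e^2(N_e^2-1)}$ satisfies $$\mathbb{E}[\mathrm{CRB}_w(\phi)]=\frac{12\sigma_r^2(\sigma_r^2+|c_4|^2LdN_e)\tan(\frac\pi2-\delta)}{|c_4|^4L^3d^2\pi^2N_e^2(N_e^2-1)(\pi-2\delta)}.$$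
   Context: $j=\sqrt{-1}$. $\mathbf{a}(\theta)\in\mathbb{C}^N$, $\mathbf{b}(\theta)\in\mathbb{C}^M$, $\mathbf{c}(\phi)\in\mathbb{C}^{N_e}$ are uniform linear array steering vectors with $i$-th entries $e^{-j\pi\sin(\theta)\frac{N-(2i-1)}{2}}$, $e^{-j\pi\sin(\theta)\frac{M-(2i-1)}{2}}$, $e^{-j\pi\sin(\phi)\frac{N_e-(2i-1)}{2}}$ respectively; primes denote derivatives with respect to $\theta$ (for $\mathbf{a},\mathbf{b}$) or $\phi$ (for $\mathbf{c}$). This is the SSJB precoding scheme; the angles are restricted to the truncated interval so that the expectations are finite. *)

theory Defs
  imports "HOL-Probability.Probability"
begin

text \<open>Vectors in C^n are represented as functions nat => complex, with entries
  indexed by {1..n} (entries outside {1..n} are irrelevant).\<close>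

definition steer :: "nat \<Rightarrow> real \<Rightarrow> nat \<Rightarrow> complex" where
  "steer n x i = exp (- \<i> * complex_of_real (pi * sin x * (real n - (2 * real i - 1)) / 2))"

definition dsteer :: "nat \<Rightarrow> real \<Rightarrow> nat \<Rightarrow> complex" where
  "dsteer n x i = vector_derivative (\<lambda>t. steer n t i) (at x)"

definition hip :: "nat \<Rightarrow> (nat \<Rightarrow> complex) \<Rightarrow> (nat \<Rightarrow> complex) \<Rightarrow> complex" where
  "hip n u v = (\<Sum>i=1..n. cnj (u i) * v i)"

definition vnorm :: "nat \<Rightarrow> (nat \<Rightarrow> complex) \<Rightarrow> real" where
  "vnorm n u = sqrt (\<Sum>i=1..n. (cmod (u i))\<^sup>2)"

definition qform :: "nat \<Rightarrow> (nat \<Rightarrow> complex) \<Rightarrow> (nat \<Rightarrow> nat \<Rightarrow> complex) \<Rightarrow> (nat \<Rightarrow> complex) \<Rightarrow> complex" where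
  "qform n u R v = (\<Sum>i=1..n. \<Sum>k=1..n. cnj (u i) * R i k * v k)"

definition atil :: "nat \<Rightarrow> real \<Rightarrow> nat \<Rightarrow> complex" where
  "atil N th = (\<lambda>i. steer N th i / complex_of_real (vnorm N (steer N th)))"

definition htil :: "nat \<Rightarrow> real \<Rightarrow> (nat \<Rightarrow> complex) \<Rightarrow> nat \<Rightarrow> complex" where
  "htil N th h =
     (let r = (\<lambda>i. h i - hip N (atil N th) h * atil N th i)
      in (\<lambda>i. r i / complex_of_real (vnorm N r)))"

definition Rx :: "nat \<Rightarrow> real \<Rightarrow> real \<Rightarrow> complex \<Rightarrow> complex \<Rightarrow> real \<Rightarrow> (nat \<Rightarrow> complex)
                   \<Rightarrow> (nat \<Rightarrow> nat \<Rightarrow> complex) \<Rightarrow> nat \<Rightarrow> nat \<Rightarrow> complex" where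
  "Rx N P \<tau> \<alpha> \<beta> th h t =
     (let t1 = (\<lambda>i. \<alpha> * atil N th i + \<beta> * htil N th h i)
      in (\<lambda>i k. complex_of_real (P * \<tau>) * t1 i * cnj (t1 k)
               + complex_of_real ((1 - \<tau>) * P / (real N - 2)) *
                 (\<Sum>m=3..N. t m i * cnj (t m k))))"

text \<open>CRB(theta) = Q / (||b'||^2 a^H R a + ||b||^2 a'^H R a' - | ||b||^2 a^H R a' |^2 / (||b||^2 a^H R a)),
  Q = sigma_r^2 / (2 |c3|^2 L). The denominator is real; we take its real part.\<close>
definition crb :: "nat \<Rightarrow> nat \<Rightarrow> nat \<Rightarrow> real \<Rightarrow> complex \<Rightarrow> (nat \<Rightarrow> nat \<Rightarrow> complex) \<Rightarrow> real \<Rightarrow> real" where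
  "crb N M L \<sigma>r c3 R th =
     (let a = steer N th; a' = dsteer N th; b = steer M th; b' = dsteer M th;
          nb2 = complex_of_real ((vnorm M b)\<^sup>2); nb'2 = complex_of_real ((vnorm M b')\<^sup>2);
          Q = \<sigma>r\<^sup>2 / (2 * (cmod c3)\<^sup>2 * real L);
          D = nb'2 * qform N a R a + nb2 * qform N a' R a'
              - complex_of_real ((cmod (nb2 * qform N a R a'))\<^sup>2) / (nb2 * qform N a R a)
      in Q / Re D)"

definition crb_s :: "nat \<Rightarrow> nat \<Rightarrow> nat \<Rightarrow> real \<Rightarrow> complex \<Rightarrow> (nat \<Rightarrow> nat \<Rightarrow> complex) \<Rightarrow> real \<Rightarrow> real \<Rightarrow> real" where
  "crb_s N Ne L \<sigma>r c4 R th ph =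
     \<sigma>r\<^sup>2 / (2 * (cmod c4)\<^sup>2 * real L * (vnorm Ne (dsteer Ne ph))\<^sup>2
              * Re (qform N (steer N th) R (steer N th)))"

definition crb_w :: "nat \<Rightarrow> nat \<Rightarrow> real \<Rightarrow> complex \<Rightarrow> real \<Rightarrow> real \<Rightarrow> real" where
  "crb_w Ne L \<sigma>r c4 d ph =
     6 * \<sigma>r\<^sup>2 * (\<sigma>r\<^sup>2 + (cmod c4)\<^sup>2 * real L * d * real Ne) /
     ((cmod c4)^4 * real L ^ 3 * d\<^sup>2 * pi\<^sup>2 * (cos ph)\<^sup>2 * (real Ne)\<^sup>2 * ((real Ne)\<^sup>2 - 1))"

text \<open>Index type of the real-valued random variables: real and imaginary parts
  of h_i, and the two angles.\<close>
datatype ridx = ReH nat | ImH nat | Th | Ph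

definition hvec :: "(ridx \<Rightarrow> 'w \<Rightarrow> real) \<Rightarrow> 'w \<Rightarrow> nat \<Rightarrow> complex" where
  "hvec Z w i = Complex (Z (ReH i) w) (Z (ImH i) w)"

definition hidx :: "nat \<Rightarrow> ridx set" where
  "hidx N = ReH ` {1..N} \<union> ImH ` {1..N}"

end

theory Submission imports Defs begin

definition kk :: "nat \<Rightarrow> nat \<Rightarrow> real" where
  "kk n i = (real n - (2 * real i - 1)) / 2"

lemma steer_alt: "steer n x i = exp (- \<i> * complex_of_real (pi * sin x * kk n i))"
  unfolding steer_def kk_def by (simp add: mult.assoc)

lemma cmod_steer[simp]: "cmod (steer n x i) = 1"
proof -
  have "- \<i> * complex_of_real (pi * sin x * kk n i) = \<i> * complex_of_real (- (pi * sin x * kk n i))"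
    by simp
  then show ?thesis unfolding steer_alt by (simp only: norm_exp_i_times)
qed

lemma dsteer_eq: "dsteer n x i = - \<i> * complex_of_real (pi * cos x * kk n i) * steer n x i"
proof -
  define F where "F z = exp (- \<i> * (of_real pi * sin z * of_real (kk n i)))" for z :: complex
  have Fe: "F (of_real t) = steer n t i" for t
    unfolding F_def steer_alt by (simp add: sin_of_real)
  have "(F has_field_derivative (F (of_real x) * (- \<i> * (of_real pi * cos (of_real x) * of_real (kk n i))))) (at (of_real x))"
    unfolding F_def by (auto intro!: derivative_eq_intros)
  then have "((\<lambda>t. F (of_real t)) has_vector_derivative (F (of_real x) * (- \<i> * (of_real pi * cos (of_real x) * of_real (kk n i))))) (at x)"
    by (rule has_vector_derivative_real_field)
  then have "((\<lambda>t. steer n t i) has_vector_derivative (- \<i> * complex_of_real (pi * cos x * kk n i) * steer n x i)) (at x)"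
    unfolding Fe by (simp add: cos_of_real mult_ac)
  then show ?thesis unfolding dsteer_def by (rule vector_derivative_at)
qed

lemma sum_i: "(\<Sum>i=1..n. real i) = real n * (real n + 1) / 2"
  by (induction n) (auto simp: field_simps)

lemma sum_i2: "(\<Sum>i=1..n. (real i)^2) = real n * (real n + 1) * (2 * real n + 1) / 6"
  by (induction n) (auto simp: field_simps power2_eq_square)

lemma sum_kk2: "(\<Sum>i=1..n. (kk n i)^2) = real n * ((real n)^2 - 1) / 12"
proof -
  have "(\<Sum>i=1..n. (kk n i)^2) = (\<Sum>i=1..n. ((real n + 1)^2 - 4 * (real n + 1) * real i + 4 * (real i)^2) / 4)"
    by (rule sum.cong) (auto simp: kk_def power2_eq_square field_simps)
  also have "\<dots> = (real n * (real n + 1)^2 - 4 * (real n + 1) * (\<Sum>i=1..n. real i) + 4 * (\<Sum>i=1..n. (real i)^2)) / 4"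
    by (simp add: sum_divide_distrib[symmetric] sum.distrib sum_subtractf sum_distrib_left[symmetric])
  also have "\<dots> = real n * ((real n)^2 - 1) / 12"
    unfolding sum_i sum_i2 by (simp add: field_simps power2_eq_square power3_eq_cube)
  finally show ?thesis .
qed

lemma vnorm_steer: "vnorm n (steer n x) = sqrt (real n)"
  unfolding vnorm_def by simp

lemma vnorm_dsteer2: "(vnorm n (dsteer n x))^2 = pi^2 * (cos x)^2 * (real n * ((real n)^2 - 1) / 12)"
proof -
  have "(vnorm n (dsteer n x))^2 = (\<Sum>i=1..n. (cmod (dsteer n x i))\<^sup>2)"
    unfolding vnorm_def by (simp add: sum_nonneg)
  also have "\<dots> = (\<Sum>i=1..n. pi^2 * (cos x)^2 * (kk n i)^2)"
    by (rule sum.cong) (auto simp: dsteer_eq norm_mult power_mult_distrib abs_mult)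
  also have "\<dots> = pi^2 * (cos x)^2 * (\<Sum>i=1..n. (kk n i)^2)"
    by (simp add: sum_distrib_left)
  finally show ?thesis by (simp only: sum_kk2)
qed

lemma hip_cnj: "cnj (hip n x y) = hip n y x"
  unfolding hip_def by (simp add: mult.commute)

lemma hip_diff_left: "hip n (\<lambda>i. x i - z i) y = hip n x y - hip n z y"
  unfolding hip_def by (simp add: algebra_simps sum_subtractf)

lemma hip_diff_right: "hip n y (\<lambda>i. x i - z i) = hip n y x - hip n y z"
  unfolding hip_def by (simp add: algebra_simps sum_subtractf)

lemma hip_sum_left: "hip n (\<lambda>i. \<Sum>m\<in>S. c m * w m i) y = (\<Sum>m\<in>S. cnj (c m) * hip n (w m) y)"
proof -
  have "hip n (\<lambda>i. \<Sum>m\<in>S. c m * w m i) y = (\<Sum>i=1..n. \<Sum>m\<in>S. cnj (c m) * (cnj (w m i) * y i))"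
    unfolding hip_def by (simp add: sum_distrib_right sum_distrib_left mult_ac)
  also have "\<dots> = (\<Sum>m\<in>S. \<Sum>i=1..n. cnj (c m) * (cnj (w m i) * y i))"
    by (rule sum.swap)
  finally show ?thesis unfolding hip_def by (simp add: sum_distrib_left)
qed

lemma hip_sum_right: "hip n y (\<lambda>i. \<Sum>m\<in>S. c m * w m i) = (\<Sum>m\<in>S. c m * hip n y (w m))"
proof -
  have "hip n y (\<lambda>i. \<Sum>m\<in>S. c m * w m i) = (\<Sum>i=1..n. \<Sum>m\<in>S. c m * (cnj (y i) * w m i))"
    unfolding hip_def by (simp add: sum_distrib_left mult_ac)
  also have "\<dots> = (\<Sum>m\<in>S. \<Sum>i=1..n. c m * (cnj (y i) * w m i))"
    by (rule sum.swap)
  finally show ?thesis unfolding hip_def by (simp add: sum_distrib_left)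
qed

lemma hip_self: "hip n v v = complex_of_real ((vnorm n v)^2)"
proof -
  have e: "cnj z * z = complex_of_real ((cmod z)^2)" for z
    by (metis complex_norm_square mult.commute of_real_power)
  show ?thesis unfolding hip_def vnorm_def
    by (simp add: sum_nonneg e)
qed

lemma bessel:
  assumes fin: "finite S"
    and on: "\<forall>m\<in>S. \<forall>m'\<in>S. hip n (w m) (w m') = (if m = m' then 1 else 0)"
  shows "(\<Sum>m\<in>S. (cmod (hip n (w m) v))^2) \<le> (vnorm n v)^2"
proof -
  define c where "c m = hip n (w m) v" for m
  define W where "W i = (\<Sum>m\<in>S. c m * w m i)" for i
  have cc: "cnj (c m) * c m = complex_of_real ((cmod (c m))^2)" for m
    by (metis complex_norm_square mult.commute of_real_power)
  have sq: "(\<Sum>m\<in>S. cnj (c m) * c m) = complex_of_real (\<Sum>m\<in>S. (cmod (c m))^2)"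
    by (simp add: cc)
  have vW: "hip n v W = (\<Sum>m\<in>S. cnj (c m) * c m)"
  proof -
    have "hip n v (w m) = cnj (c m)" for m unfolding c_def by (simp add: hip_cnj)
    then show ?thesis unfolding W_def hip_sum_right by (simp add: mult.commute)
  qed
  have Wv: "hip n W v = (\<Sum>m\<in>S. cnj (c m) * c m)"
    unfolding W_def hip_sum_left c_def by simp
  have WW: "hip n W W = (\<Sum>m\<in>S. cnj (c m) * c m)"
  proof -
    have "hip n W W = (\<Sum>m\<in>S. cnj (c m) * (\<Sum>m'\<in>S. c m' * hip n (w m) (w m')))"
      unfolding W_def hip_sum_left hip_sum_right ..
    also have "\<dots> = (\<Sum>m\<in>S. cnj (c m) * c m)"
    proof (rule sum.cong[OF refl])
      fix m assume m: "m \<in> S"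
      have "(\<Sum>m'\<in>S. c m' * hip n (w m) (w m')) = (\<Sum>m'\<in>S. if m' = m then c m else 0)"
        by (rule sum.cong) (use on m in auto)
      also have "\<dots> = c m" using fin m by simp
      finally show "cnj (c m) * (\<Sum>m'\<in>S. c m' * hip n (w m) (w m')) = cnj (c m) * c m" by simp
    qed
    finally show ?thesis .
  qed
  have "hip n (\<lambda>i. v i - W i) (\<lambda>i. v i - W i) = hip n v v - hip n v W - (hip n W v - hip n W W)"
    by (simp add: hip_diff_left hip_diff_right)
  also have "\<dots> = complex_of_real ((vnorm n v)^2 - (\<Sum>m\<in>S. (cmod (c m))^2))"
    unfolding vW Wv WW sq by (simp add: hip_self)
  finally have "complex_of_real ((vnorm n (\<lambda>i. v i - W i))^2) = complex_of_real ((vnorm n v)^2 - (\<Sum>m\<in>S. (cmod (c m))^2))"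
    by (simp add: hip_self)
  then have "(vnorm n (\<lambda>i. v i - W i))^2 = (vnorm n v)^2 - (\<Sum>m\<in>S. (cmod (c m))^2)"
    using of_real_eq_iff by blast
  moreover have "0 \<le> (vnorm n (\<lambda>i. v i - W i))^2" by simp
  ultimately show ?thesis unfolding c_def by linarith
qed

lemma qform_gen:
  "qform n x (\<lambda>i k. A * u i * cnj (u k) + B * (\<Sum>m\<in>S. w m i * cnj (w m k))) y
   = A * hip n x u * hip n u y + B * (\<Sum>m\<in>S. hip n x (w m) * hip n (w m) y)"
proof -
  have "qform n x (\<lambda>i k. A * u i * cnj (u k) + B * (\<Sum>m\<in>S. w m i * cnj (w m k))) y
     = (\<Sum>i=1..n. \<Sum>k=1..n. A * ((cnj (x i) * u i) * (cnj (u k) * y k))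
         + B * (\<Sum>m\<in>S. (cnj (x i) * w m i) * (cnj (w m k) * y k)))"
    unfolding qform_def
    by (intro sum.cong refl) (simp add: algebra_simps sum_distrib_left sum_distrib_right)
  also have "\<dots> = A * ((\<Sum>i=1..n. cnj (x i) * u i) * (\<Sum>k=1..n. cnj (u k) * y k))
      + B * (\<Sum>i=1..n. \<Sum>k=1..n. \<Sum>m\<in>S. (cnj (x i) * w m i) * (cnj (w m k) * y k))"
  proof -
    have "(\<Sum>i=1..n. \<Sum>k=1..n. A * ((cnj (x i) * u i) * (cnj (u k) * y k)))
        = A * ((\<Sum>i=1..n. cnj (x i) * u i) * (\<Sum>k=1..n. cnj (u k) * y k))"
      by (subst sum_product) (simp only: sum_distrib_left[of A])
    moreover have "(\<Sum>i=1..n. \<Sum>k=1..n. B * (\<Sum>m\<in>S. (cnj (x i) * w m i) * (cnj (w m k) * y k)))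
        = B * (\<Sum>i=1..n. \<Sum>k=1..n. \<Sum>m\<in>S. (cnj (x i) * w m i) * (cnj (w m k) * y k))"
      unfolding sum_distrib_left ..
    ultimately show ?thesis by (simp add: sum.distrib)
  qed
  also have "(\<Sum>i=1..n. \<Sum>k=1..n. \<Sum>m\<in>S. (cnj (x i) * w m i) * (cnj (w m k) * y k))
      = (\<Sum>i=1..n. \<Sum>m\<in>S. \<Sum>k=1..n. (cnj (x i) * w m i) * (cnj (w m k) * y k))"
    by (intro sum.cong refl sum.swap)
  also have "\<dots> = (\<Sum>m\<in>S. \<Sum>i=1..n. \<Sum>k=1..n. (cnj (x i) * w m i) * (cnj (w m k) * y k))"
    by (rule sum.swap)
  also have "\<dots> = (\<Sum>m\<in>S. hip n x (w m) * hip n (w m) y)"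
    unfolding hip_def by (simp add: sum_product)
  finally show ?thesis unfolding hip_def by (simp add: mult.assoc)
qed

lemma hip_scale_right: "hip n x (\<lambda>i. c * y i) = c * hip n x y"
  unfolding hip_def by (simp add: sum_distrib_left mult_ac)

lemma hip_scale_left: "hip n (\<lambda>i. c * x i) y = cnj c * hip n x y"
  unfolding hip_def by (simp add: sum_distrib_left mult_ac)

lemma hip_div_right: "hip n x (\<lambda>i. y i / c) = hip n x y / c"
  unfolding hip_def by (simp add: sum_divide_distrib)

lemma hip_add_right: "hip n x (\<lambda>i. y i + z i) = hip n x y + hip n x z"
  unfolding hip_def by (simp add: algebra_simps sum.distrib)

lemma hip_atil_left: "hip N (atil N th) v = hip N (steer N th) v / complex_of_real (sqrt (real N))"
  unfolding hip_def atil_def vnorm_steer by (simp add: sum_divide_distrib)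

lemma hip_atil_right: "hip N v (atil N th) = hip N v (steer N th) / complex_of_real (sqrt (real N))"
  unfolding atil_def vnorm_steer by (rule hip_div_right)

lemma hip_steer_self: "hip N (steer N th) (steer N th) = complex_of_real (real N)"
  unfolding hip_self vnorm_steer by simp

lemma hip_atil_self: "N \<ge> 1 \<Longrightarrow> hip N (atil N th) (atil N th) = 1"
  unfolding hip_atil_left hip_atil_right hip_steer_self
  by (simp add: field_simps flip: of_real_mult)

lemma hip_atil_htil: "N \<ge> 1 \<Longrightarrow> hip N (atil N th) (htil N th h) = 0"
  unfolding htil_def Let_def hip_div_right hip_diff_right hip_scale_right[of _ _ "hip N (atil N th) h"]
  by (simp add: hip_atil_self)

lemma hip_steer_htil: "N \<ge> 1 \<Longrightarrow> hip N (steer N th) (htil N th h) = 0"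
  using hip_atil_htil[of N th h] unfolding hip_atil_left by simp

lemma sqrtN_sq: "complex_of_real (sqrt (real N)) * complex_of_real (sqrt (real N)) = of_nat N"
proof -
  have "sqrt (real N) * sqrt (real N) = real N" by simp
  then have "complex_of_real (sqrt (real N) * sqrt (real N)) = complex_of_real (real N)" by simp
  then show ?thesis by (simp only: of_real_mult of_real_of_nat_eq)
qed

lemma hip_steer_t1: "N \<ge> 1 \<Longrightarrow>
   hip N (steer N th) (\<lambda>i. \<alpha> * atil N th i + \<beta> * htil N th h i) = \<alpha> * complex_of_real (sqrt (real N))"
  unfolding hip_add_right hip_scale_right hip_atil_right hip_steer_self
  by (simp add: hip_steer_htil field_simps sqrtN_sq)

lemma qform_Rx: "qform N x (Rx N P \<tau> \<alpha> \<beta> th h t) y =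
   complex_of_real (P * \<tau>) * hip N x (\<lambda>i. \<alpha> * atil N th i + \<beta> * htil N th h i)
      * hip N (\<lambda>i. \<alpha> * atil N th i + \<beta> * htil N th h i) y
   + complex_of_real ((1 - \<tau>) * P / (real N - 2)) * (\<Sum>m=3..N. hip N x (t m) * hip N (t m) y)"
  unfolding Rx_def Let_def by (rule qform_gen)

lemma hip_steer_t:
  assumes "N \<ge> 1" "\<forall>m\<in>{3..N}. hip N (atil N th) (t m) = 0" "m \<in> {3..N}"
  shows "hip N (steer N th) (t m) = 0"
  using assms hip_atil_left[of N th "t m"] by auto

lemma qaa:
  assumes N: "N \<ge> 3" and perp: "\<forall>m\<in>{3..N}. hip N (atil N th) (t m) = 0"
  shows "qform N (steer N th) (Rx N P \<tau> \<alpha> \<beta> th h t) (steer N th)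
         = complex_of_real (P * \<tau> * (cmod \<alpha>)^2 * real N)"
proof -
  have N1: "N \<ge> 1" using N by simp
  have z: "(\<Sum>m=3..N. hip N (steer N th) (t m) * hip N (t m) (steer N th)) = 0"
    using hip_steer_t[OF N1 perp] by simp
  have c: "hip N (\<lambda>i. \<alpha> * atil N th i + \<beta> * htil N th h i) (steer N th) = cnj \<alpha> * complex_of_real (sqrt (real N))"
    using hip_steer_t1[OF N1, of th \<alpha> \<beta> h] hip_cnj
    by (metis complex_cnj_complex_of_real complex_cnj_mult)
  have e: "\<alpha> * cnj \<alpha> = complex_of_real ((cmod \<alpha>)^2)"
    by (metis complex_norm_square of_real_power)
  show ?thesis
    unfolding qform_Rx z c hip_steer_t1[OF N1]
    by (simp add: mult_ac sqrtN_sq) (simp add: mult.assoc[symmetric] e)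
qed

lemma ReD:
  assumes N: "N \<ge> 3" and perp: "\<forall>m\<in>{3..N}. hip N (atil N th) (t m) = 0"
    and P: "P > 0" and tau: "\<tau> > 0" and al: "\<alpha> \<noteq> 0" and Mr: "Mr \<ge> 1"
  defines "u \<equiv> (\<lambda>i. complex_of_real (kk N i) * steer N th i)"
  defines "a \<equiv> steer N th" and "a' \<equiv> dsteer N th" and "b \<equiv> steer Mr th" and "b' \<equiv> dsteer Mr th"
  shows "Re (complex_of_real ((vnorm Mr b')\<^sup>2) * qform N a (Rx N P \<tau> \<alpha> \<beta> th h t) a + complex_of_real ((vnorm Mr b)\<^sup>2) * qform N a' (Rx N P \<tau> \<alpha> \<beta> th h t) a'
              - complex_of_real ((cmod (complex_of_real ((vnorm Mr b)\<^sup>2) * qform N a (Rx N P \<tau> \<alpha> \<beta> th h t) a'))\<^sup>2)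
                / (complex_of_real ((vnorm Mr b)\<^sup>2) * qform N a (Rx N P \<tau> \<alpha> \<beta> th h t) a))
         = pi^2 * (cos th)^2 * (real Mr * ((real Mr)^2 - 1) / 12) * (P * \<tau> * (cmod \<alpha>)^2 * real N)
           + real Mr * pi^2 * (cos th)^2 * ((1 - \<tau>) * P / (real N - 2)) * (\<Sum>m=3..N. (cmod (hip N (t m) u))^2)"
proof -
  have N1: "N \<ge> 1" using N by simp
  define c where "c = - \<i> * complex_of_real (pi * cos th)"
  have a': "a' = (\<lambda>i. c * u i)"
    unfolding a'_def u_def c_def by (rule ext) (simp add: dsteer_eq mult_ac)
  define T1 where "T1 = (\<lambda>i. \<alpha> * atil N th i + \<beta> * htil N th h i)"
  define p where "p = hip N T1 u"
  define S2 where "S2 = (\<Sum>m=3..N. (cmod (hip N (t m) u))^2)"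
  define d where "d = P * \<tau> * (cmod \<alpha>)^2 * real N"
  define \<kappa> where "\<kappa> = (1 - \<tau>) * P / (real N - 2)"
  have dpos: "d > 0" unfolding d_def using P tau al N by simp
  have cc: "cnj c * c = complex_of_real ((pi * cos th)^2)"
    unfolding c_def by (simp add: power2_eq_square mult_ac)
  have zz: "cnj z * z = complex_of_real ((cmod z)^2)" for z
    by (metis complex_norm_square mult.commute of_real_power)
  have qaa: "qform N a (Rx N P \<tau> \<alpha> \<beta> th h t) a = complex_of_real d"
    unfolding a_def d_def by (rule qaa[OF N perp])
  have st: "hip N a (t m) = 0" if "m \<in> {3..N}" for m
    unfolding a_def using hip_steer_t[OF N1 perp that] .
  have qad: "qform N a (Rx N P \<tau> \<alpha> \<beta> th h t) a' = complex_of_real (P * \<tau>) * (\<alpha> * complex_of_real (sqrt (real N))) * (c * p)"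
    unfolding qform_Rx a' hip_scale_right using st
    by (simp add: hip_steer_t1[OF N1] a_def p_def T1_def)
  have qdd: "qform N a' (Rx N P \<tau> \<alpha> \<beta> th h t) a' = complex_of_real ((pi * cos th)^2 * (P * \<tau> * (cmod p)^2 + \<kappa> * S2))"
  proof -
    have "qform N a' (Rx N P \<tau> \<alpha> \<beta> th h t) a' = complex_of_real (P * \<tau>) * (cnj c * cnj p) * (c * p)
        + complex_of_real \<kappa> * (\<Sum>m=3..N. (cnj c * cnj (hip N (t m) u)) * (c * hip N (t m) u))"
      unfolding qform_Rx a' hip_scale_right hip_scale_left \<kappa>_def p_def T1_def
      by (simp add: hip_cnj)
    also have "\<dots> = complex_of_real (P * \<tau>) * (cnj c * c) * (cnj p * p)
        + complex_of_real \<kappa> * (cnj c * c) * (\<Sum>m=3..N. cnj (hip N (t m) u) * hip N (t m) u)"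
      by (simp add: mult_ac sum_distrib_left)
    also have "\<dots> = complex_of_real ((pi * cos th)^2 * (P * \<tau> * (cmod p)^2 + \<kappa> * S2))"
      unfolding cc unfolding zz S2_def by (simp add: algebra_simps)
    finally show ?thesis .
  qed
  have nb: "(vnorm Mr b)^2 = real Mr"
    unfolding b_def vnorm_steer by simp
  have nb': "(vnorm Mr b')^2 = pi^2 * (cos th)^2 * (real Mr * ((real Mr)^2 - 1) / 12)"
    unfolding b'_def by (rule vnorm_dsteer2)
  have cm: "(cmod (complex_of_real (real Mr) * qform N a (Rx N P \<tau> \<alpha> \<beta> th h t) a'))^2
      = (real Mr)^2 * (P * \<tau>)^2 * (cmod \<alpha>)^2 * real N * (pi * cos th)^2 * (cmod p)^2"
    unfolding qad c_def by (simp add: norm_mult power_mult_distrib abs_mult P tau less_imp_le)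
  show ?thesis
    unfolding qaa qdd nb nb' cm
    using dpos Mr al N
    by (simp add: d_def S2_def \<kappa>_def field_simps power2_eq_square del: of_real_diff of_real_add)
qed

lemma crb_bound:
  assumes N: "N \<ge> 3" and perp: "\<forall>m\<in>{3..N}. hip N (atil N th) (t m) = 0"
    and orth: "\<forall>m\<in>{3..N}. \<forall>m'\<in>{3..N}. hip N (t m) (t m') = (if m = m' then 1 else 0)"
    and P: "P > 0" and tau: "\<tau> > 0" "\<tau> < 1" and al: "\<alpha> \<noteq> 0" and Mr: "Mr \<ge> 2"
    and sig: "\<sigma>r > 0" and c3: "c3 \<noteq> 0" and L: "L \<ge> 1"
  shows "crb N Mr L \<sigma>r c3 (Rx N P \<tau> \<alpha> \<beta> th h t) th \<ge>
     6 * \<sigma>r\<^sup>2 / (real Mr * real N * pi\<^sup>2 * real L * P * (cmod c3)\<^sup>2 *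
                ((cmod \<alpha>)\<^sup>2 * \<tau> * ((real Mr)\<^sup>2 - 1) + ((real N)\<^sup>2 - 1) * (1 - \<tau>) / (real N - 2))) / (cos th)^2"
proof -
  define u where "u = (\<lambda>i. complex_of_real (kk N i) * steer N th i)"
  define S2 where "S2 = (\<Sum>m=3..N. (cmod (hip N (t m) u))^2)"
  define d where "d = P * \<tau> * (cmod \<alpha>)^2 * real N"
  define \<kappa> where "\<kappa> = (1 - \<tau>) * P / (real N - 2)"
  define y where "y = (cos th)^2"
  define W where "W = real Mr * ((real Mr)^2 - 1) / 12 * d + real Mr * \<kappa> * S2"
  define W0 where "W0 = real Mr * ((real Mr)^2 - 1) / 12 * d + real Mr * \<kappa> * (real N * ((real N)^2 - 1) / 12)"
  define Q where "Q = \<sigma>r\<^sup>2 / (2 * (cmod c3)\<^sup>2 * real L)"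
  have Mr1: "Mr \<ge> 1" using Mr by simp
  have vu: "(vnorm N u)^2 = real N * ((real N)^2 - 1) / 12"
  proof -
    have "(vnorm N u)^2 = (\<Sum>i=1..N. (cmod (u i))\<^sup>2)"
      unfolding vnorm_def by (simp add: sum_nonneg)
    also have "\<dots> = (\<Sum>i=1..N. (kk N i)^2)"
      unfolding u_def by (simp add: norm_mult)
    finally show ?thesis by (simp only: sum_kk2)
  qed
  have S2le: "S2 \<le> real N * ((real N)^2 - 1) / 12"
    unfolding S2_def using bessel[OF _ orth, of u] vu by simp
  have S2ge: "S2 \<ge> 0" unfolding S2_def by (simp add: sum_nonneg)
  have dpos: "d > 0" unfolding d_def using P tau al N by simp
  have kpos: "\<kappa> > 0" unfolding \<kappa>_def using P tau N by simp
  have M2: "(real Mr)^2 - 1 > 0" using Mr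
    by (metis less_1_mult numeral_le_real_of_nat_iff one_less_numeral_iff power2_eq_square
        semiring_norm(76) diff_gt_0_iff_gt order_less_le_trans)
  have Wpos: "W > 0" unfolding W_def using dpos kpos S2ge M2 Mr
    by (intro add_pos_nonneg) (auto intro!: mult_pos_pos mult_nonneg_nonneg)
  have WW0: "W \<le> W0" unfolding W_def W0_def using S2le kpos Mr
    by (simp add: mult_left_mono)
  have Qpos: "Q > 0" unfolding Q_def using sig c3 L by simp
  have crb_eq: "crb N Mr L \<sigma>r c3 (Rx N P \<tau> \<alpha> \<beta> th h t) th = Q / (pi^2 * y * W)"
    unfolding crb_def Let_def ReD[OF N perp P tau(1) al Mr1] Q_def
    by (simp add: y_def W_def S2_def u_def d_def \<kappa>_def algebra_simps)
  have W0eq: "W0 = real Mr * real N * P * ((cmod \<alpha>)\<^sup>2 * \<tau> * ((real Mr)\<^sup>2 - 1) + ((real N)\<^sup>2 - 1) * (1 - \<tau>) / (real N - 2)) / 12"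
  proof -
    have "real N - 2 > 0" using N by simp
    then show ?thesis unfolding W0_def d_def \<kappa>_def by (simp add: field_simps)
  qed
  have rhs: "6 * \<sigma>r\<^sup>2 / (real Mr * real N * pi\<^sup>2 * real L * P * (cmod c3)\<^sup>2 *
                ((cmod \<alpha>)\<^sup>2 * \<tau> * ((real Mr)\<^sup>2 - 1) + ((real N)\<^sup>2 - 1) * (1 - \<tau>) / (real N - 2))) / (cos th)^2
         = Q / (pi^2 * y * W0)"
    unfolding W0eq Q_def y_def by (simp add: field_simps)
  show ?thesis
  proof (cases "y = 0")
    case True
    then show ?thesis unfolding crb_eq rhs by simp
  next
    case False
    then have "y > 0" unfolding y_def by simp
    then have "Q / (pi^2 * y * W0) \<le> Q / (pi^2 * y * W)"
      using Qpos Wpos WW0 by (intro divide_left_mono) (auto intro!: mult_pos_pos mult_left_mono)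
    then show ?thesis unfolding crb_eq rhs .
  qed
qed

lemma int_sec2:
  fixes X :: "'w \<Rightarrow> real"
  assumes d: "0 < \<delta>" "\<delta> < pi / 2" and K: "K \<ge> 0"
    and dist: "distributed M lborel X
           (\<lambda>x. indicator {-pi/2+\<delta> .. pi/2-\<delta>} x / measure lborel {-pi/2+\<delta> .. pi/2-\<delta>})"
  shows "(\<integral>\<^sup>+ w. ennreal (K / (cos (X w))^2) \<partial>M) = ennreal (K * (2 * tan (pi/2 - \<delta>)) / (pi - 2*\<delta>))"
proof -
  define I where "I = {-pi/2+\<delta> .. pi/2-\<delta>}"
  define m where "m = pi - 2*\<delta>"
  have mI: "measure lborel I = m" unfolding I_def m_def using d by simp
  have mpos: "m > 0" unfolding m_def using d by simp
  have cpos: "cos x > 0" if "x \<in> I" for x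
    using that d unfolding I_def by (intro cos_gt_zero_pi) auto
  have "(\<integral>\<^sup>+ w. ennreal (K / (cos (X w))^2) \<partial>M)
      = (\<integral>\<^sup>+ x. ennreal (indicator I x / m) * ennreal (K / (cos x)^2) \<partial>lborel)"
    using distributed_nn_integral[OF dist[folded I_def, unfolded mI], of "\<lambda>x. ennreal (K / (cos x)^2)"]
    by simp
  also have "\<dots> = (\<integral>\<^sup>+ x. ennreal (K / (m * (cos x)^2)) * indicator I x \<partial>lborel)"
  proof (intro nn_integral_cong)
    fix x
    have "ennreal (1 / m) * ennreal (K / (cos x)\<^sup>2) = ennreal (1 / m * (K / (cos x)\<^sup>2))"
      using mpos K by (intro ennreal_mult[symmetric]) auto
    then show "ennreal (indicator I x / m) * ennreal (K / (cos x)\<^sup>2) = ennreal (K / (m * (cos x)\<^sup>2)) * indicator I x"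
    proof (cases "x \<in> I")
      case True
      have "1 / m * (K / (cos x)\<^sup>2) = K / (m * (cos x)\<^sup>2)" by simp
      then show ?thesis using True \<open>ennreal (1 / m) * _ = _\<close> by simp
    qed simp
  qed
  also have "\<dots> = ennreal (K / m * tan (pi/2-\<delta>) - K / m * tan (-pi/2+\<delta>))"
  proof (rule nn_integral_has_integral_lebesgue')
    show "0 \<le> K / (m * (cos x)\<^sup>2)" for x using K mpos by simp
    show "((\<lambda>x. K / (m * (cos x)\<^sup>2)) has_integral K / m * tan (pi/2-\<delta>) - K / m * tan (-pi/2+\<delta>)) I"
      unfolding I_def
    proof (rule fundamental_theorem_of_calculus)
      show "-pi/2+\<delta> \<le> pi/2-\<delta>" using d by simp
      fix x assume x: "x \<in> {-pi/2+\<delta> .. pi/2-\<delta>}"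
      then have "cos x \<noteq> 0" using cpos[of x] unfolding I_def by simp
      then have "((\<lambda>x. K / m * tan x) has_real_derivative (K / m * inverse ((cos x)^2))) (at x)"
        by (intro DERIV_cmult DERIV_tan)
      moreover have "K / m * inverse ((cos x)^2) = K / (m * (cos x)\<^sup>2)"
        by (simp add: divide_inverse)
      ultimately have "((\<lambda>x. K / m * tan x) has_real_derivative K / (m * (cos x)\<^sup>2)) (at x)"
        by simp
      then show "((\<lambda>x. K / m * tan x) has_vector_derivative K / (m * (cos x)\<^sup>2)) (at x within {-pi/2+\<delta> .. pi/2-\<delta>})"
        unfolding has_real_derivative_iff_has_vector_derivative
        by (rule has_vector_derivative_at_within)
    qed
  qed
  also have "K / m * tan (pi/2-\<delta>) - K / m * tan (-pi/2+\<delta>) = K * (2 * tan (pi/2 - \<delta>)) / (pi - 2*\<delta>)"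
  proof -
    have "tan (-pi/2+\<delta>) = - tan (pi/2-\<delta>)"
      by (metis minus_diff_eq tan_minus uminus_add_conv_diff minus_divide_left)
    then show ?thesis unfolding m_def by (simp add: field_simps)
  qed
  finally show ?thesis .
qed

lemma aux_s: "(a::real) / (2 * b * l * (p * y * (n * e / 12)) * d) = 6 * a / (b * l * p * (n * e) * d) / y"
  by (cases "b = 0 \<or> l = 0 \<or> p = 0 \<or> y = 0 \<or> n = 0 \<or> e = 0 \<or> d = 0") (auto simp: field_simps)

lemma aux1: "6 * (a::real) / (m1*m2*m3*m4*m5*m6*x) * (2 * t) / w = 12 * a * t / (w*m1*m2*m3*m4*m5*m6*x)"
proof (cases "w*m1*m2*m3*m4*m5*m6*x = 0")
  case True then show ?thesis by auto
next
  case False then show ?thesis by (simp add: field_simps)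
qed

lemma aux2: "6*(a::real)/(c*l*p*(n*e)*(pp*tt*al*nn)) * (2*t)/w = 12*a*t/(n*nn*p*w*l*pp*c*al*tt*e)"
proof (cases "n*nn*p*w*l*pp*c*al*tt*e = 0")
  case True then show ?thesis by auto
next
  case False then show ?thesis by (simp add: field_simps)
qed

lemma aux3: "6*(a::real)*S/D*(2*t)/w = 12*a*S*t/(D*w)"
proof (cases "D*w = 0")
  case True then show ?thesis by auto
next
  case False then show ?thesis by (simp add: field_simps)
qed

lemma aux4: "(x::real)/(a1*a2*a3*a4*y*a5*a6) = x/(a1*a2*a3*a4*a5*a6)/y"
  by (simp add: divide_divide_eq_left mult_ac)

theorem lemma8:
  fixes M :: "'w measure" and Z :: "ridx \<Rightarrow> 'w \<Rightarrow> real"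
    and N Mr Ne L :: nat and P \<tau> \<sigma>r \<delta> :: real and c3 c4 \<alpha> \<beta> :: complex
    and t :: "'w \<Rightarrow> nat \<Rightarrow> nat \<Rightarrow> complex"
  assumes "prob_space M"
    and "N \<ge> 3" "Mr \<ge> 2" "Ne \<ge> 2" "L \<ge> 1"
    and "P > 0" "0 < \<tau>" "\<tau> < 1" "\<sigma>r > 0" "c3 \<noteq> 0" "c4 \<noteq> 0"
    and "(cmod \<alpha>)\<^sup>2 + (cmod \<beta>)\<^sup>2 = 1" "\<alpha> \<noteq> 0"
    and "0 < \<delta>" "\<delta> < pi / 2"
    \<comment> \<open>h_i i.i.d. CN(0,1): real and imaginary parts independent N(0,1/2)\<close>
    and "\<And>i. i \<in> {1..N} \<Longrightarrow> distributed M lborel (Z (ReH i)) (\<lambda>x. ennreal (normal_density 0 (sqrt (1/2)) x))"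
    and "\<And>i. i \<in> {1..N} \<Longrightarrow> distributed M lborel (Z (ImH i)) (\<lambda>x. ennreal (normal_density 0 (sqrt (1/2)) x))"
    \<comment> \<open>theta, phi uniform on [-pi/2+delta, pi/2-delta]\<close>
    and "distributed M lborel (Z Th)
           (\<lambda>x. indicator {-pi/2+\<delta> .. pi/2-\<delta>} x / measure lborel {-pi/2+\<delta> .. pi/2-\<delta>})"
    and "distributed M lborel (Z Ph)
           (\<lambda>x. indicator {-pi/2+\<delta> .. pi/2-\<delta>} x / measure lborel {-pi/2+\<delta> .. pi/2-\<delta>})"
    \<comment> \<open>independence of the h components, and of theta (resp. phi) from h\<close>
    and "prob_space.indep_vars M (\<lambda>_. borel) Z (hidx N \<union> {Th})"
    and "prob_space.indep_vars M (\<lambda>_. borel) Z (hidx N \<union> {Ph})"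
    \<comment> \<open>t_3..t_N: (almost surely) an orthonormal basis of the orthogonal complement of span{a~, h~}\<close>
    and "AE w in M.
           (\<forall>m\<in>{3..N}. \<forall>m'\<in>{3..N}. hip N (t w m) (t w m') = (if m = m' then 1 else 0)) \<and>
           (\<forall>m\<in>{3..N}. hip N (atil N (Z Th w)) (t w m) = 0 \<and>
                       hip N (htil N (Z Th w) (hvec Z w)) (t w m) = 0) \<and>
           (\<forall>v. hip N (atil N (Z Th w)) v = 0 \<and> hip N (htil N (Z Th w) (hvec Z w)) v = 0 \<longrightarrow>
                (\<exists>c. \<forall>i\<in>{1..N}. v i = (\<Sum>m=3..N. c m * t w m i)))"
  shows "((\<integral>\<^sup>+ w. ennreal (crb N Mr L \<sigma>r c3 (Rx N P \<tau> \<alpha> \<beta> (Z Th w) (hvec Z w) (t w)) (Z Th w)) \<partial>M)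
           \<ge> ennreal (12 * \<sigma>r\<^sup>2 * tan (pi/2 - \<delta>) /
               ((pi - 2*\<delta>) * real Mr * real N * pi\<^sup>2 * real L * P * (cmod c3)\<^sup>2 *
                ((cmod \<alpha>)\<^sup>2 * \<tau> * ((real Mr)\<^sup>2 - 1) + ((real N)\<^sup>2 - 1) * (1 - \<tau>) / (real N - 2))))) \<and>
         ((\<integral>\<^sup>+ w. ennreal (crb_s N Ne L \<sigma>r c4 (Rx N P \<tau> \<alpha> \<beta> (Z Th w) (hvec Z w) (t w)) (Z Th w) (Z Ph w)) \<partial>M)
           = ennreal (12 * \<sigma>r\<^sup>2 * tan (pi/2 - \<delta>) /
               (real Ne * real N * pi\<^sup>2 * (pi - 2*\<delta>) * real L * P * (cmod c4)\<^sup>2 * (cmod \<alpha>)\<^sup>2 * \<tau> *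
                ((real Ne)\<^sup>2 - 1)))) \<and>
         ((\<integral>\<^sup>+ w. ennreal (crb_w Ne L \<sigma>r c4 (P * \<tau> * (cmod \<alpha>)\<^sup>2 * real N) (Z Ph w)) \<partial>M)
           = ennreal (12 * \<sigma>r\<^sup>2 * (\<sigma>r\<^sup>2 + (cmod c4)\<^sup>2 * real L * (P * \<tau> * (cmod \<alpha>)\<^sup>2 * real N) * real Ne)
                 * tan (pi/2 - \<delta>) /
               ((cmod c4)^4 * real L ^ 3 * (P * \<tau> * (cmod \<alpha>)\<^sup>2 * real N)\<^sup>2 * pi\<^sup>2 * (real Ne)\<^sup>2 *
                ((real Ne)\<^sup>2 - 1) * (pi - 2*\<delta>))))"
proof -
  note ps = assms(1)
  have N3: "N \<ge> 3" and Mr2: "Mr \<ge> 2" and Ne2: "Ne \<ge> 2" and L1: "L \<ge> 1" using assms by auto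
  have P: "P > 0" and tau: "0 < \<tau>" "\<tau> < 1" and sig: "\<sigma>r > 0" and c3: "c3 \<noteq> 0" and c4: "c4 \<noteq> 0"
    and al: "\<alpha> \<noteq> 0" and dl: "0 < \<delta>" "\<delta> < pi / 2" using assms by auto
  have distTh: "distributed M lborel (Z Th)
           (\<lambda>x. indicator {-pi/2+\<delta> .. pi/2-\<delta>} x / measure lborel {-pi/2+\<delta> .. pi/2-\<delta>})"
    and distPh: "distributed M lborel (Z Ph)
           (\<lambda>x. indicator {-pi/2+\<delta> .. pi/2-\<delta>} x / measure lborel {-pi/2+\<delta> .. pi/2-\<delta>})"
    using assms by auto
  have AEo: "AE w in M.
           (\<forall>m\<in>{3..N}. \<forall>m'\<in>{3..N}. hip N (t w m) (t w m') = (if m = m' then 1 else 0)) \<and>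
           (\<forall>m\<in>{3..N}. hip N (atil N (Z Th w)) (t w m) = 0)"
    using assms(22) by (rule AE_mp) (intro AE_I2, auto)
  define d where "d = P * \<tau> * (cmod \<alpha>)\<^sup>2 * real N"
  have dpos: "d > 0" unfolding d_def using P tau al N3 by simp
  have Ne2p: "(real Ne)\<^sup>2 - 1 > 0"
  proof -
    have "real Ne \<ge> 2" using Ne2 by simp
    then have "(real Ne)\<^sup>2 \<ge> 2\<^sup>2" by (intro power_mono) auto
    then show ?thesis by simp
  qed
  have Mr2p: "(real Mr)\<^sup>2 - 1 > 0"
  proof -
    have "real Mr \<ge> 2" using Mr2 by simp
    then have "(real Mr)\<^sup>2 \<ge> 2\<^sup>2" by (intro power_mono) auto
    then show ?thesis by simp
  qed
  have Np: "(real N)\<^sup>2 - 1 > 0" "real N - 2 > 0"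
  proof -
    have "real N \<ge> 3" using N3 by simp
    then have "(real N)\<^sup>2 \<ge> 3\<^sup>2" by (intro power_mono) auto
    then show "(real N)\<^sup>2 - 1 > 0" by simp
    show "real N - 2 > 0" using \<open>real N \<ge> 3\<close> by simp
  qed
  define X where "X = (cmod \<alpha>)\<^sup>2 * \<tau> * ((real Mr)\<^sup>2 - 1) + ((real N)\<^sup>2 - 1) * (1 - \<tau>) / (real N - 2)"
  have Xpos: "X > 0" unfolding X_def using al tau Mr2p Np
    by (intro add_pos_nonneg) (auto intro!: mult_pos_pos divide_nonneg_pos)
  define K1 where "K1 = 6 * \<sigma>r\<^sup>2 / (real Mr * real N * pi\<^sup>2 * real L * P * (cmod c3)\<^sup>2 * X)"
  define Ks where "Ks = 6 * \<sigma>r\<^sup>2 / ((cmod c4)\<^sup>2 * real L * pi\<^sup>2 * (real Ne * ((real Ne)\<^sup>2 - 1)) * d)"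
  define Kw where "Kw = 6 * \<sigma>r\<^sup>2 * (\<sigma>r\<^sup>2 + (cmod c4)\<^sup>2 * real L * d * real Ne) /
     ((cmod c4)^4 * real L ^ 3 * d\<^sup>2 * pi\<^sup>2 * (real Ne)\<^sup>2 * ((real Ne)\<^sup>2 - 1))"
  have K1pos: "K1 \<ge> 0" unfolding K1_def using Xpos P L1 by simp
  have Kspos: "Ks \<ge> 0" unfolding Ks_def using dpos Ne2p L1 by simp
  have Kwpos: "Kw \<ge> 0" unfolding Kw_def using dpos Ne2p L1 sig by (simp add: add_nonneg_nonneg)
  have part1: "(\<integral>\<^sup>+ w. ennreal (crb N Mr L \<sigma>r c3 (Rx N P \<tau> \<alpha> \<beta> (Z Th w) (hvec Z w) (t w)) (Z Th w)) \<partial>M)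
      \<ge> (\<integral>\<^sup>+ w. ennreal (K1 / (cos (Z Th w))^2) \<partial>M)"
  proof (rule nn_integral_mono_AE)
    show "AE w in M. ennreal (K1 / (cos (Z Th w))^2) \<le> ennreal (crb N Mr L \<sigma>r c3 (Rx N P \<tau> \<alpha> \<beta> (Z Th w) (hvec Z w) (t w)) (Z Th w))"
      using AEo
    proof (rule AE_mp, intro AE_I2 impI)
      fix w assume h: "(\<forall>m\<in>{3..N}. \<forall>m'\<in>{3..N}. hip N (t w m) (t w m') = (if m = m' then 1 else 0)) \<and>
           (\<forall>m\<in>{3..N}. hip N (atil N (Z Th w)) (t w m) = 0)"
      show "ennreal (K1 / (cos (Z Th w))^2) \<le> ennreal (crb N Mr L \<sigma>r c3 (Rx N P \<tau> \<alpha> \<beta> (Z Th w) (hvec Z w) (t w)) (Z Th w))"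
        using crb_bound[OF N3 conjunct2[OF h] conjunct1[OF h] P tau al Mr2 sig c3 L1, of \<beta> "hvec Z w"]
        unfolding K1_def X_def by (intro ennreal_leI) simp
    qed
  qed
  have e1: "(\<integral>\<^sup>+ w. ennreal (K1 / (cos (Z Th w))^2) \<partial>M) = ennreal (K1 * (2 * tan (pi/2 - \<delta>)) / (pi - 2*\<delta>))"
    by (rule int_sec2[OF dl K1pos distTh])
  have part2: "(\<integral>\<^sup>+ w. ennreal (crb_s N Ne L \<sigma>r c4 (Rx N P \<tau> \<alpha> \<beta> (Z Th w) (hvec Z w) (t w)) (Z Th w) (Z Ph w)) \<partial>M)
      = (\<integral>\<^sup>+ w. ennreal (Ks / (cos (Z Ph w))^2) \<partial>M)"
  proof (rule nn_integral_cong_AE)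
    show "AE w in M. ennreal (crb_s N Ne L \<sigma>r c4 (Rx N P \<tau> \<alpha> \<beta> (Z Th w) (hvec Z w) (t w)) (Z Th w) (Z Ph w)) = ennreal (Ks / (cos (Z Ph w))^2)"
      using AEo
    proof (rule AE_mp, intro AE_I2 impI)
      fix w assume h: "(\<forall>m\<in>{3..N}. \<forall>m'\<in>{3..N}. hip N (t w m) (t w m') = (if m = m' then 1 else 0)) \<and>
           (\<forall>m\<in>{3..N}. hip N (atil N (Z Th w)) (t w m) = 0)"
      have q: "qform N (steer N (Z Th w)) (Rx N P \<tau> \<alpha> \<beta> (Z Th w) (hvec Z w) (t w)) (steer N (Z Th w)) = complex_of_real d"
        unfolding d_def by (rule qaa[OF N3 conjunct2[OF h]])
      show "ennreal (crb_s N Ne L \<sigma>r c4 (Rx N P \<tau> \<alpha> \<beta> (Z Th w) (hvec Z w) (t w)) (Z Th w) (Z Ph w)) = ennreal (Ks / (cos (Z Ph w))^2)"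
        unfolding crb_s_def q vnorm_dsteer2 Ks_def by (simp only: Re_complex_of_real aux_s)
    qed
  qed
  have e2: "(\<integral>\<^sup>+ w. ennreal (Ks / (cos (Z Ph w))^2) \<partial>M) = ennreal (Ks * (2 * tan (pi/2 - \<delta>)) / (pi - 2*\<delta>))"
    by (rule int_sec2[OF dl Kspos distPh])
  have part3: "(\<integral>\<^sup>+ w. ennreal (crb_w Ne L \<sigma>r c4 (P * \<tau> * (cmod \<alpha>)\<^sup>2 * real N) (Z Ph w)) \<partial>M)
      = (\<integral>\<^sup>+ w. ennreal (Kw / (cos (Z Ph w))^2) \<partial>M)"
    unfolding crb_w_def Kw_def d_def by (intro nn_integral_cong) (simp only: aux4)
  have e3: "(\<integral>\<^sup>+ w. ennreal (Kw / (cos (Z Ph w))^2) \<partial>M) = ennreal (Kw * (2 * tan (pi/2 - \<delta>)) / (pi - 2*\<delta>))"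
    by (rule int_sec2[OF dl Kwpos distPh])
  have r1: "K1 * (2 * tan (pi/2 - \<delta>)) / (pi - 2*\<delta>) = 12 * \<sigma>r\<^sup>2 * tan (pi/2 - \<delta>) /
               ((pi - 2*\<delta>) * real Mr * real N * pi\<^sup>2 * real L * P * (cmod c3)\<^sup>2 *
                ((cmod \<alpha>)\<^sup>2 * \<tau> * ((real Mr)\<^sup>2 - 1) + ((real N)\<^sup>2 - 1) * (1 - \<tau>) / (real N - 2)))"
    unfolding K1_def X_def by (rule aux1)
  have r2: "Ks * (2 * tan (pi/2 - \<delta>)) / (pi - 2*\<delta>) = 12 * \<sigma>r\<^sup>2 * tan (pi/2 - \<delta>) /
               (real Ne * real N * pi\<^sup>2 * (pi - 2*\<delta>) * real L * P * (cmod c4)\<^sup>2 * (cmod \<alpha>)\<^sup>2 * \<tau> *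
                ((real Ne)\<^sup>2 - 1))"
    unfolding Ks_def d_def by (rule aux2)
  have r3: "Kw * (2 * tan (pi/2 - \<delta>)) / (pi - 2*\<delta>) = 12 * \<sigma>r\<^sup>2 * (\<sigma>r\<^sup>2 + (cmod c4)\<^sup>2 * real L * (P * \<tau> * (cmod \<alpha>)\<^sup>2 * real N) * real Ne)
                 * tan (pi/2 - \<delta>) /
               ((cmod c4)^4 * real L ^ 3 * (P * \<tau> * (cmod \<alpha>)\<^sup>2 * real N)\<^sup>2 * pi\<^sup>2 * (real Ne)\<^sup>2 *
                ((real Ne)\<^sup>2 - 1) * (pi - 2*\<delta>))"
    unfolding Kw_def d_def by (rule aux3)
  show ?thesis
    using part1 e1 part2 e2 part3 e3 r1 r2 r3 by simp
qed

end
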